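(* Let $d\ge1$, $d'=1$, $t_f>0$, and let $A:\mathbb{R}^d\to(0,\infty)$ be $C^3$ with $A(r)\ge C^{-1}$ for all $r$. For each $\varepsilon>0$ let $r_\varepsilon:[0,t_f]\to\mathbb{R}^d$ be $C^3$ (the atomic trajectory of the XLMD system described in the context) with $|r_\varepsilon|,|\dot r_\varepsilon|,|\ddot r_\varepsilon|\le C$ on $[0,t_f]$ uniformly in $\varepsilon$. Let $k_\varepsilon(t)=A(r_\varepsilon(t))^{1/2}$ and $\kappa_\varepsilon(t)=\int_0^tk_\varepsilon(\tau)\,d\tau$. For $s\in[0,t_f]$, $\xi_0\in\mathbb{R}$, let $\Phi^{s,t}_\varepsilon(0,\xi_0)=(\tilde y_\varepsilon(t),\dot{\tilde y}_\varepsilon(t))$, $t\ge s$, where $\tilde y_\varepsilon$ solves $\varepsilon\ddot{\tilde y}_\varepsilon=-A(r_\varepsilon(t))\tilde y_\varepsilon$, $\tilde y_\varepsilon(s)=0$, $\dot{\tilde y}_\varepsilon(s)=\xi_0$. Then $$\Phi^{s,t}_\varepsilon(0,\xi_0)=\begin{pmatrix}\varepsilon^{1/2}k_\varepsilon(t)^{-1/2}k_\varepsilon(s)^{-1/2}\sin\!\Big(\frac{\kappa_\varepsilon(t)-\kappa_\varepsilon(s)}{\sqrt\varepsilon}\Big)\xi_0\\ k_\varepsilon(t)^{1/2}k_\varepsilon(s)^{-1/2}\cos\!\Big(\frac{\kappa_\varepsilon(t)-\kappa_\varepsilon(s)}{\sqrt\varepsilon}\Big)\xi_0\end{pmatrix}+\begin{pmatrix}\mathcal{O}(\varepsilon)\\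 \mathcal{O}(\varepsilon^{1/2})\end{pmatrix}$$ as $\varepsilon\to0$, for $0\le s\le t\le t_f$.
   Context: In the paper $r_\varepsilon$ is the atomic component of the solution of the XLMD system $\ddot r_\varepsilon=F(r_\varepsilon)-\frac{\partial Q}{\partial r}(r_\varepsilon,x_\varepsilon)$, $\varepsilon\ddot x_\varepsilon=b(r_\varepsilon)-A(r_\varepsilon)x_\varepsilon$ with $Q(r,x)=\tfrac12A(r)x^2-b(r)x$; only the stated regularity and $\varepsilon$-uniform bounds are used. The $\mathcal{O}$ constants are independent of $\varepsilon$ (and of $s,t\in[0,t_f]$). *)

theory Defs
  imports "HOL-Analysis.Analysis"
begin

definition C3 :: "('a::euclidean_space \<Rightarrow> real) \<Rightarrow> bool" where
  "C3 f \<longleftrightarrow> (\<exists>(f1 :: 'a \<Rightarrow> ('a \<Rightarrow>\<^sub>L real))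
                 (f2 :: 'a \<Rightarrow> ('a \<Rightarrow>\<^sub>L ('a \<Rightarrow>\<^sub>L real)))
                 (f3 :: 'a \<Rightarrow> ('a \<Rightarrow>\<^sub>L ('a \<Rightarrow>\<^sub>L ('a \<Rightarrow>\<^sub>L real)))).
      (\<forall>x. (f has_derivative blinfun_apply (f1 x)) (at x)) \<and>
      (\<forall>x. (f1 has_derivative blinfun_apply (f2 x)) (at x)) \<and>
      (\<forall>x. (f2 has_derivative blinfun_apply (f3 x)) (at x)) \<and>
      continuous_on UNIV f3)"

definition kfun :: "('a \<Rightarrow> real) \<Rightarrow> (real \<Rightarrow> real \<Rightarrow> 'a) \<Rightarrow> real \<Rightarrow> real \<Rightarrow> real" where
  "kfun A r \<epsilon> t = sqrt (A (r \<epsilon> t))"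

definition kappa :: "('a \<Rightarrow> real) \<Rightarrow> (real \<Rightarrow> real \<Rightarrow> 'a) \<Rightarrow> real \<Rightarrow> real \<Rightarrow> real" where
  "kappa A r \<epsilon> t = integral {0..t} (kfun A r \<epsilon>)"

end

theory Submission
  imports Defs
begin

lemma energy:
  fixes a a1 e e1 R :: "real \<Rightarrow> real"
  assumes eps: "eps > 0" and m: "m > 0" and st: "s \<le> t" "t \<le> T" and D: "t - s \<le> D"
   and d: "\<And>u. u \<in> {s..T} \<Longrightarrow> (a has_real_derivative a1 u) (at u within {s..T}) \<and>
        (e has_real_derivative e1 u) (at u within {s..T}) \<and>
        (e1 has_real_derivative (-(a u * e u) - R u)/eps) (at u within {s..T}) \<and>
        m \<le> a u \<and> \<bar>a1 u\<bar> \<le> B1 \<and> \<bar>R u\<bar> \<le> rho"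
   and init: "e s = 0" "e1 s = 0"
  shows "a t * (e t)^2 + eps * (e1 t)^2 \<le> rho^2/eps * D * exp((B1/m+1)*D)"
proof -
  define L where "L = B1/m+1"
  define E where "E u = a u * (e u)^2 + eps*(e1 u)^2" for u
  have sI: "s \<in> {s..T}" using st by auto
  have B1: "B1 \<ge> 0" using d[OF sI] by linarith
  have L: "L > 0" unfolding L_def using B1 m by (simp add: add_nonneg_pos)
  have rho: "rho \<ge> 0" using d[OF sI] by linarith
  have dE: "(E has_real_derivative a1 u * (e u)^2 + a u * (2*e u*e1 u) + eps*(2*e1 u * ((-(a u*e u) - R u)/eps))) (at u within {s..T})"
    if u: "u \<in> {s..T}" for u
    unfolding E_def using d[OF u]
    by (auto intro!: derivative_eq_intros)
  have dEb: "a1 u * (e u)^2 + a u * (2*e u*e1 u) + eps*(2*e1 u * ((-(a u*e u) - R u)/eps)) \<le> L * E u + rho^2/eps"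
    if u: "u \<in> {s..T}" for u
  proof -
    from d[OF u] have am: "m \<le> a u" and a1b: "\<bar>a1 u\<bar> \<le> B1" and Rb: "\<bar>R u\<bar> \<le> rho" by auto
    have eq: "a1 u * (e u)^2 + a u * (2*e u*e1 u) + eps*(2*e1 u * ((-(a u*e u) - R u)/eps))
       = a1 u * (e u)^2 - 2 * e1 u * R u" using eps by (simp add: field_simps)
    have "a1 u * (e u)^2 \<le> B1 * (e u)^2" using a1b by (intro mult_right_mono) auto
    also have "B1 * (e u)^2 = (B1/m) * (m * (e u)^2)" using m by simp
    also have "\<dots> \<le> (B1/m) * (a u * (e u)^2)" using am B1 m
      by (intro mult_left_mono mult_right_mono) auto
    finally have 1: "a1 u * (e u)^2 \<le> (B1/m) * (a u * (e u)^2)" .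
    have "0 \<le> (eps * e1 u + R u)^2 / eps" using eps by simp
    also have "(eps * e1 u + R u)^2 / eps = eps * (e1 u)^2 + 2 * e1 u * R u + (R u)^2/eps"
      using eps by (simp add: field_simps power2_eq_square)
    finally have 2: "- 2 * e1 u * R u \<le> eps * (e1 u)^2 + (R u)^2/eps" by linarith
    have "(R u)^2 \<le> rho^2" using Rb by (metis abs_ge_zero power2_abs power_mono)
    then have 3: "(R u)^2/eps \<le> rho^2/eps" using eps by (simp add: divide_right_mono)
    have 4: "0 \<le> a u * (e u)^2" "0 \<le> eps * (e1 u)^2" using am m eps by auto
    have "(B1/m) * (eps * (e1 u)^2) \<ge> 0" using B1 m 4 by simp
    then show ?thesis unfolding eq E_def L_def using 1 2 3 4 by (simp add: algebra_simps)
  qed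
  define G where "G u = E u * exp (-L*(u-s)) - rho^2/eps*(u-s)" for u
  have dG: "(G has_real_derivative (a1 u * (e u)^2 + a u * (2*e u*e1 u) + eps*(2*e1 u * ((-(a u*e u) - R u)/eps))) * exp (-L*(u-s)) + E u * (exp (-L*(u-s)) * (-L)) - rho^2/eps) (at u within {s..T})"
    if u: "u \<in> {s..T}" for u
    unfolding G_def using dE[OF u] eps
    by (auto intro!: derivative_eq_intros simp: algebra_simps)
  have Gneg: "(a1 u * (e u)^2 + a u * (2*e u*e1 u) + eps*(2*e1 u * ((-(a u*e u) - R u)/eps))) * exp (-L*(u-s)) + E u * (exp (-L*(u-s)) * (-L)) - rho^2/eps \<le> 0"
    if u: "u \<in> {s..T}" for u
  proof -
    have ex: "exp (-L*(u-s)) \<le> 1" "exp (-L*(u-s)) > 0" using u L by (auto simp: mult_nonneg_nonneg)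
    have "(a1 u * (e u)^2 + a u * (2*e u*e1 u) + eps*(2*e1 u * ((-(a u*e u) - R u)/eps))) * exp (-L*(u-s))
       \<le> (L * E u + rho^2/eps) * exp (-L*(u-s))"
      using dEb[OF u] ex by (intro mult_right_mono) auto
    moreover have "rho^2/eps * exp (-L*(u-s)) \<le> rho^2/eps" using ex eps
      by (intro mult_left_le) auto
    ultimately show ?thesis by (simp add: algebra_simps)
  qed
  have "G t \<le> G s"
  proof (rule DERIV_nonpos_imp_decreasing_open[OF st(1)])
    fix x assume x: "s < x" "x < t"
    then have xI: "x \<in> {s..T}" using st by auto
    have "at x within {s..T} = at x" using x st by (intro at_within_Icc_at) auto
    then show "\<exists>y. DERIV G x :> y \<and> y \<le> 0" using dG[OF xI] Gneg[OF xI] by metis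
  next
    have "continuous_on {s..T} G" by (rule DERIV_continuous_on[OF dG])
    then show "continuous_on {s..t} G" by (rule continuous_on_subset) (use st in auto)
  qed
  also have "G s = 0" unfolding G_def E_def using init by simp
  finally have "E t * exp (-L*(t-s)) \<le> rho^2/eps*(t-s)" unfolding G_def by simp
  then have "(E t * exp (-L*(t-s))) * exp (L*(t-s)) \<le> rho^2/eps*(t-s) * exp (L*(t-s))"
    by (intro mult_right_mono) auto
  moreover have "(E t * exp (-L*(t-s))) * exp (L*(t-s)) = E t"
    by (simp add: mult.assoc exp_add[symmetric])
  ultimately have "E t \<le> rho^2/eps*(t-s) * exp (L*(t-s))" by linarith
  also have "\<dots> \<le> rho^2/eps * D * exp (L*D)"
    using D st L eps rho by (intro mult_mono mult_left_mono) (auto simp: mult_left_mono)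
  finally show ?thesis unfolding E_def L_def .
qed

definition "wp (a::real\<Rightarrow>real) u = exp (-(ln (a u))/4)"
definition "wq (a::real\<Rightarrow>real) u = exp (ln (a u)/4)"
definition "wp1 a (a1::real\<Rightarrow>real) u = -(wp a u * a1 u / a u)/4"
definition "wp2 a a1 (a2::real\<Rightarrow>real) u = -(wp1 a a1 u * a1 u / a u + wp a u * (a2 u * a u - a1 u * a1 u)/(a u)^2)/4"
definition "wq1 a a1 u = wq a u * a1 u / a u / 4"

lemma wkb_derivs:
  fixes a a1 a2 :: "real \<Rightarrow> real"
  assumes da: "(a has_real_derivative a1 u) (at u within S)"
   and da1: "(a1 has_real_derivative a2 u) (at u within S)"
   and apos: "a u > 0"
  shows "(wp a has_real_derivative wp1 a a1 u) (at u within S)"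
    and "(wq a has_real_derivative wq1 a a1 u) (at u within S)"
    and "(wp1 a a1 has_real_derivative wp2 a a1 a2 u) (at u within S)"
    and "wp a u * sqrt (a u) = wq a u" "wq a u * sqrt (a u) = a u * wp a u"
    and "wp1 a a1 u * sqrt (a u) + wq1 a a1 u = 0"
    and "wp a u * wq a u = 1"
proof -
  show dp: "(wp a has_real_derivative wp1 a a1 u) (at u within S)"
    unfolding wp_def[abs_def] wp1_def using da apos
    by (auto intro!: derivative_eq_intros simp: field_simps)
  show "(wq a has_real_derivative wq1 a a1 u) (at u within S)"
    unfolding wq_def[abs_def] wq1_def using da apos
    by (auto intro!: derivative_eq_intros simp: field_simps)
  have "((\<lambda>u. -(wp a u * a1 u / a u)/4) has_real_derivative wp2 a a1 a2 u) (at u within S)"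
    unfolding wp2_def wp1_def using da da1 dp apos
    by (auto intro!: derivative_eq_intros simp: field_simps power2_eq_square wp1_def)
  then show "(wp1 a a1 has_real_derivative wp2 a a1 a2 u) (at u within S)" unfolding wp1_def[abs_def] .
  have sa: "sqrt (a u) = exp (ln (a u)/2)"
    using apos by (simp add: powr_half_sqrt[symmetric] powr_def)
  have ea: "a u = exp (ln (a u))" using apos by simp
  show pq: "wp a u * sqrt (a u) = wq a u" unfolding wp_def wq_def sa exp_add[symmetric] by simp
  have "wq a u * sqrt (a u) = exp (ln (a u)) * wp a u" unfolding wp_def wq_def sa exp_add[symmetric] by simp
  then show "wq a u * sqrt (a u) = a u * wp a u" using ea by simp
  show "wp1 a a1 u * sqrt (a u) + wq1 a a1 u = 0" unfolding wp1_def wq1_def using pq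
    by (simp add: field_simps)
  show "wp a u * wq a u = 1" unfolding wp_def wq_def exp_add[symmetric] by simp
qed

definition "wP m = m powr (-1/4)"
definition "wP1 m B1 = wP m * B1 / (4*m)"
definition "wP2 m B1 B2 = (wP1 m B1 * B1 / m + wP m * (B2/m + B1^2/m^2))/4"
definition "wQ m B1 B2 D xi = xi^2 * (wP m)^2 * (wP2 m B1 B2)^2 * D * exp((B1/m+1)*D)"
definition "wK1 m B1 B2 D xi = sqrt (wQ m B1 B2 D xi / m)"
definition "wK2 m B1 B2 D xi = sqrt (wQ m B1 B2 D xi) + \<bar>xi\<bar> * wP m * wP1 m B1"

lemma wkb_bounds:
  assumes m: "m > 0" and am: "m \<le> a u" and b1: "\<bar>a1 u\<bar> \<le> B1" and b2: "\<bar>a2 u\<bar> \<le> B2"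
  shows "0 < wp a u" "wp a u \<le> wP m" "\<bar>wp1 a a1 u\<bar> \<le> wP1 m B1" "\<bar>wp2 a a1 a2 u\<bar> \<le> wP2 m B1 B2"
proof -
  have apos: "a u > 0" using m am by linarith
  show p0: "0 < wp a u" unfolding wp_def by simp
  have "wp a u = a u powr (-1/4)" unfolding wp_def powr_def using apos by simp
  also have "\<dots> \<le> m powr (-1/4)" by (rule powr_mono2') (use m am in auto)
  finally show pb: "wp a u \<le> wP m" unfolding wP_def .
  have X: "\<bar>a1 u\<bar> / a u \<le> B1 / m" using b1 m am by (intro frac_le) auto
  have Yv: "\<bar>a2 u\<bar> / a u \<le> B2 / m" using b2 m am by (intro frac_le) auto
  have X0: "0 \<le> \<bar>a1 u\<bar> / a u" using apos by simp
  have e1: "\<bar>wp1 a a1 u\<bar> = wp a u * (\<bar>a1 u\<bar> / a u) / 4"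
    unfolding wp1_def using apos p0 by (simp add: abs_mult abs_divide)
  also have "\<dots> \<le> wP m * (B1/m) / 4" using pb X X0 p0 by (intro divide_right_mono mult_mono) auto
  finally show p1b: "\<bar>wp1 a a1 u\<bar> \<le> wP1 m B1" unfolding wP1_def by (simp add: field_simps)
  have eq: "wp2 a a1 a2 u = -(wp1 a a1 u * (a1 u / a u) + wp a u * (a2 u / a u - (a1 u / a u)^2))/4"
    unfolding wp2_def using apos by (simp add: field_simps power2_eq_square)
  have sq: "(a1 u / a u)^2 = (\<bar>a1 u\<bar> / a u)^2" by (simp add: power_divide)
  have "\<bar>wp2 a a1 a2 u\<bar> \<le> (\<bar>wp1 a a1 u\<bar> * (\<bar>a1 u\<bar> / a u) + wp a u * (\<bar>a2 u\<bar> / a u + (\<bar>a1 u\<bar> / a u)^2))/4"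
    unfolding eq using apos p0 sq
    by (auto simp: abs_mult abs_divide power2_abs intro!: order.trans[OF abs_triangle_ineq] add_mono mult_left_mono
        order.trans[OF abs_triangle_ineq4])
  also have "\<dots> \<le> (wP1 m B1 * (B1/m) + wP m * (B2/m + (B1/m)^2))/4"
    using p1b X Yv X0 p0 pb apos
    by (intro divide_right_mono add_mono mult_mono power_mono) auto
  finally show "\<bar>wp2 a a1 a2 u\<bar> \<le> wP2 m B1 B2" unfolding wP2_def by (simp add: power_divide)
qed

lemma wkb:
  fixes a a1 a2 th y y' :: "real \<Rightarrow> real"
  assumes eps: "eps > 0" and m: "m > 0" and st: "s \<le> t" "t \<le> T" and D: "t - s \<le> D"
   and d: "\<And>u. u \<in> {s..T} \<Longrightarrow> (a has_real_derivative a1 u) (at u within {s..T}) \<and>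
        (a1 has_real_derivative a2 u) (at u within {s..T}) \<and>
        (th has_real_derivative sqrt (a u)/sqrt eps) (at u within {s..T}) \<and>
        (y has_real_derivative y' u) (at u within {s..T}) \<and>
        (y' has_real_derivative (- a u * y u / eps)) (at u within {s..T}) \<and>
        m \<le> a u \<and> \<bar>a1 u\<bar> \<le> B1 \<and> \<bar>a2 u\<bar> \<le> B2"
   and init: "th s = 0" "y s = 0" "y' s = xi"
  shows "\<bar>y t - sqrt eps * a t powr (-1/4) * a s powr (-1/4) * sin (th t) * xi\<bar> \<le> wK1 m B1 B2 D xi * eps
     \<and> \<bar>y' t - a t powr (1/4) * a s powr (-1/4) * cos (th t) * xi\<bar> \<le> wK2 m B1 B2 D xi * sqrt eps"
proof -
  have sI: "s \<in> {s..T}" and tI: "t \<in> {s..T}" using st by auto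
  have B1: "B1 \<ge> 0" using d[OF sI] by linarith
  have B2: "B2 \<ge> 0" using d[OF sI] by linarith
  have apos: "a u > 0" if "u \<in> {s..T}" for u using d[OF that] m by linarith
  define c where "c = xi * wp a s"
  define Y where "Y u = sqrt eps * c * wp a u * sin (th u)" for u
  define Z where "Z u = sqrt eps * c * wp1 a a1 u * sin (th u) + c * wq a u * cos (th u)" for u
  define R where "R u = eps * sqrt eps * c * wp2 a a1 a2 u * sin (th u)" for u
  define e where "e u = y u - Y u" for u
  define e1 where "e1 u = y' u - Z u" for u
  have se: "sqrt eps > 0" using eps by simp
  have dY: "(Y has_real_derivative Z u) (at u within {s..T})" if u: "u \<in> {s..T}" for u
  proof -
    have du: "(a has_real_derivative a1 u) (at u within {s..T})" "(a1 has_real_derivative a2 u) (at u within {s..T})"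
      using d[OF u] by auto
    note D = wkb_derivs[of a a1 u "{s..T}" a2, OF du apos[OF u]]
    have "(Y has_real_derivative sqrt eps * c * (wp1 a a1 u * sin (th u) + wp a u * (cos (th u) * (sqrt (a u)/sqrt eps)))) (at u within {s..T})"
      unfolding Y_def using d[OF u] D se
      by (auto intro!: derivative_eq_intros simp: field_simps)
    moreover have "sqrt eps * c * (wp1 a a1 u * sin (th u) + wp a u * (cos (th u) * (sqrt (a u)/sqrt eps))) = Z u"
    proof -
      have "sqrt (a u) * wp a u = wq a u" using D(4) by (simp add: mult.commute)
      then show ?thesis unfolding Z_def using se by (simp add: field_simps)
    qed
    ultimately show ?thesis by simp
  qed
  have dZ: "(Z has_real_derivative (-(a u * Y u) + R u)/eps) (at u within {s..T})" if u: "u \<in> {s..T}" for u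
  proof -
    have du: "(a has_real_derivative a1 u) (at u within {s..T})" "(a1 has_real_derivative a2 u) (at u within {s..T})"
      using d[OF u] by auto
    note D = wkb_derivs[of a a1 u "{s..T}" a2, OF du apos[OF u]]
    have "(Z has_real_derivative sqrt eps * c * (wp2 a a1 a2 u * sin (th u) + wp1 a a1 u * (cos (th u) * (sqrt (a u)/sqrt eps)))
        + c * (wq1 a a1 u * cos (th u) + wq a u * (- sin (th u) * (sqrt (a u)/sqrt eps)))) (at u within {s..T})"
      unfolding Z_def using d[OF u] D se
      by (auto intro!: derivative_eq_intros simp: field_simps)
    moreover have "sqrt eps * c * (wp2 a a1 a2 u * sin (th u) + wp1 a a1 u * (cos (th u) * (sqrt (a u)/sqrt eps)))
        + c * (wq1 a a1 u * cos (th u) + wq a u * (- sin (th u) * (sqrt (a u)/sqrt eps)))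
        = (-(a u * Y u) + R u)/eps"
    proof -
      have q1: "wq1 a a1 u = - (wp1 a a1 u * sqrt (a u))" using D(6) d[OF u] by linarith
      have "sqrt eps * sqrt eps = eps" using eps by simp
      then show ?thesis unfolding Y_def R_def q1 using D(5) d[OF u] se eps
        by (auto simp: field_simps)
    qed
    ultimately show ?thesis by simp
  qed
  note bnd = wkb_bounds[OF m, of a _ a1 B1 a2 B2]
  have P0: "0 < wP m" using bnd(1,2) d[OF sI] by (meson less_le_trans)
  have P10: "0 \<le> wP1 m B1" unfolding wP1_def using P0 B1 m by simp
  have P20: "0 \<le> wP2 m B1 B2" unfolding wP2_def using P0 P10 B1 B2 m by simp
  have ps: "0 < wp a s" "wp a s \<le> wP m" using bnd(1,2) d[OF sI] by auto
  have cb: "\<bar>c\<bar> \<le> \<bar>xi\<bar> * wP m" unfolding c_def using ps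
    by (auto simp: abs_mult intro!: mult_left_mono)
  define rho where "rho = eps * sqrt eps * (\<bar>xi\<bar> * wP m) * wP2 m B1 B2"
  have Rb: "\<bar>R u\<bar> \<le> rho" if u: "u \<in> {s..T}" for u
  proof -
    have "\<bar>R u\<bar> = eps * sqrt eps * \<bar>c\<bar> * \<bar>wp2 a a1 a2 u\<bar> * \<bar>sin (th u)\<bar>"
      unfolding R_def using eps by (simp add: abs_mult)
    also have "\<dots> \<le> eps * sqrt eps * (\<bar>xi\<bar> * wP m) * wP2 m B1 B2 * 1"
      using cb bnd(4) d[OF u] eps P20 P0
      by (intro mult_mono) (auto simp: abs_sin_le_one)
    finally show ?thesis unfolding rho_def by simp
  qed
  have en: "a t * (e t)^2 + eps * (e1 t)^2 \<le> rho^2/eps * D * exp((B1/m+1)*D)"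
  proof (rule energy[OF eps m st D])
    fix u assume u: "u \<in> {s..T}"
    have "(e has_real_derivative e1 u) (at u within {s..T})"
      unfolding e_def[abs_def] e1_def using d[OF u] dY[OF u] by (auto intro!: derivative_eq_intros)
    moreover have "(e1 has_real_derivative (-(a u * e u) - R u)/eps) (at u within {s..T})"
    proof -
      have "(e1 has_real_derivative (- a u * y u / eps) - (-(a u * Y u) + R u)/eps) (at u within {s..T})"
        unfolding e1_def[abs_def] using d[OF u] dZ[OF u] by (auto intro!: derivative_eq_intros)
      moreover have "(- a u * y u / eps) - (-(a u * Y u) + R u)/eps = (-(a u * e u) - R u)/eps"
        unfolding e_def using eps by (simp add: field_simps)
      ultimately show ?thesis by simp
    qed
    ultimately show "(a has_real_derivative a1 u) (at u within {s..T}) \<and>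
        (e has_real_derivative e1 u) (at u within {s..T}) \<and>
        (e1 has_real_derivative (-(a u * e u) - R u)/eps) (at u within {s..T}) \<and>
        m \<le> a u \<and> \<bar>a1 u\<bar> \<le> B1 \<and> \<bar>R u\<bar> \<le> rho"
      using d[OF u] Rb[OF u] by auto
  next
    show "e s = 0" unfolding e_def Y_def using init by simp
    have "wp a s * wq a s = 1" using wkb_derivs(7)[of a a1 s "{s..T}" a2] d[OF sI] apos[OF sI] by auto
    then show "e1 s = 0" unfolding e1_def Z_def c_def using init by (simp add: algebra_simps)
  qed
  define Q where "Q = wQ m B1 B2 D xi"
  have Q0: "0 \<le> Q" unfolding Q_def wQ_def using D st by simp
  define X where "X = xi^2 * (wP m)^2 * (wP2 m B1 B2)^2"
  have r2: "rho^2 = eps^2 * eps * X"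
    unfolding rho_def X_def using eps by (simp add: power_mult_distrib power2_abs)
  have rq: "rho^2/eps * D * exp((B1/m+1)*D) = eps^2 * Q"
    unfolding r2 Q_def wQ_def X_def[symmetric] using eps by simp
  have at: "m \<le> a t" using d[OF tI] by auto
  have en2: "a t * (e t)^2 + eps * (e1 t)^2 \<le> eps^2 * Q" using en rq by simp
  have nn: "0 \<le> eps * (e1 t)^2" using eps by simp
  have "m * (e t)^2 \<le> a t * (e t)^2" using at by (intro mult_right_mono) auto
  then have ee: "m * (e t)^2 \<le> eps^2 * Q" using en2 nn by linarith
  have "(e t)^2 \<le> eps^2 * Q / m" using ee m by (simp add: field_simps)
  also have "eps^2 * Q / m = (eps * wK1 m B1 B2 D xi)^2"
    unfolding wK1_def Q_def[symmetric] using m Q0 by (simp add: power_mult_distrib)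
  finally have "(e t)^2 \<le> (eps * wK1 m B1 B2 D xi)^2" .
  then have "\<bar>e t\<bar>^2 \<le> (eps * wK1 m B1 B2 D xi)^2" by (simp only: power2_abs)
  moreover have "0 \<le> eps * wK1 m B1 B2 D xi" unfolding wK1_def Q_def[symmetric]
    using eps Q0 m by (intro mult_nonneg_nonneg) auto
  ultimately have "\<bar>e t\<bar> \<le> eps * wK1 m B1 B2 D xi" by (rule power2_le_imp_le)
  then have ebound: "\<bar>e t\<bar> \<le> wK1 m B1 B2 D xi * eps" by (simp add: mult.commute)
  have "0 \<le> a t * (e t)^2" using at m by simp
  then have "eps * (e1 t)^2 \<le> eps^2 * Q" using en2 by linarith
  also have "eps^2 * Q = eps * (eps * Q)" by (simp add: power2_eq_square)
  finally have "eps * (e1 t)^2 \<le> eps * (eps * Q)" .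
  then have "(e1 t)^2 \<le> eps * Q" using eps by simp
  then have "(e1 t)^2 \<le> (sqrt eps * sqrt Q)^2"
    using eps Q0 by (simp add: power_mult_distrib)
  then have "\<bar>e1 t\<bar>^2 \<le> (sqrt eps * sqrt Q)^2" by (simp only: power2_abs)
  moreover have "0 \<le> sqrt eps * sqrt Q" using eps Q0 by simp
  ultimately have e1bound: "\<bar>e1 t\<bar> \<le> sqrt eps * sqrt Q" by (rule power2_le_imp_le)
  have pt: "wp a t = a t powr (-1/4)" "wp a s = a s powr (-1/4)" "wq a t = a t powr (1/4)"
    unfolding wp_def wq_def powr_def using apos[OF tI] apos[OF sI] by auto
  have 1: "y t - sqrt eps * a t powr (-1/4) * a s powr (-1/4) * sin (th t) * xi = e t"
    unfolding e_def Y_def c_def pt by simp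
  have 2: "y' t - a t powr (1/4) * a s powr (-1/4) * cos (th t) * xi = e1 t + sqrt eps * c * wp1 a a1 t * sin (th t)"
    unfolding e1_def Z_def c_def pt by simp
  have "\<bar>sqrt eps * c * wp1 a a1 t * sin (th t)\<bar> \<le> sqrt eps * (\<bar>xi\<bar> * wP m) * wP1 m B1 * 1"
  proof -
    have w1: "\<bar>wp1 a a1 t\<bar> \<le> wP1 m B1" using bnd(3) d[OF tI] by auto
    have "\<bar>sqrt eps * c * wp1 a a1 t * sin (th t)\<bar> = sqrt eps * \<bar>c\<bar> * \<bar>wp1 a a1 t\<bar> * \<bar>sin (th t)\<bar>"
      using eps by (simp add: abs_mult)
    also have "\<dots> \<le> sqrt eps * (\<bar>xi\<bar> * wP m) * wP1 m B1 * 1"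
      using cb w1 eps P10 P0 by (intro mult_mono) (auto simp: abs_sin_le_one)
    finally show ?thesis .
  qed
  then have "\<bar>y' t - a t powr (1/4) * a s powr (-1/4) * cos (th t) * xi\<bar> \<le> wK2 m B1 B2 D xi * sqrt eps"
    unfolding 2 wK2_def Q_def[symmetric] using e1bound abs_triangle_ineq[of "e1 t" "sqrt eps * c * wp1 a a1 t * sin (th t)"]
    by (simp add: algebra_simps)
  then show ?thesis using ebound 1 by simp
qed

lemma comp_derivs:
  fixes A :: "'a::euclidean_space \<Rightarrow> real"
  assumes fA: "\<forall>x. (A has_derivative blinfun_apply (f1 x)) (at x)"
    and f1d: "\<forall>x. (f1 has_derivative blinfun_apply (f2 x)) (at x)"
    and dr: "(r has_vector_derivative r1 u) (at u within S)" "(r1 has_vector_derivative r2 u) (at u within S)"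
  shows "((\<lambda>u. A (r u)) has_real_derivative f1 (r u) (r1 u)) (at u within S)"
    and "((\<lambda>u. f1 (r u) (r1 u)) has_real_derivative f2 (r u) (r1 u) (r1 u) + f1 (r u) (r2 u)) (at u within S)"
proof -
  have 1: "((A \<circ> r) has_vector_derivative f1 (r u) (r1 u)) (at u within S)"
    by (rule vector_derivative_diff_chain_within[OF dr(1) has_derivative_at_withinI]) (use fA in auto)
  then show "((\<lambda>u. A (r u)) has_real_derivative f1 (r u) (r1 u)) (at u within S)"
    by (simp add: has_real_derivative_iff_has_vector_derivative o_def)
  have 2: "((f1 \<circ> r) has_vector_derivative f2 (r u) (r1 u)) (at u within S)"
    by (rule vector_derivative_diff_chain_within[OF dr(1) has_derivative_at_withinI]) (use f1d in auto)
  have 3: "((\<lambda>u. (f1 \<circ> r) u (r1 u)) has_vector_derivative (f1 \<circ> r) u (r2 u) + (f2 (r u) (r1 u)) (r1 u)) (at u within S)"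
    by (rule blinfun.has_vector_derivative[OF 2 dr(2)])
  then show "((\<lambda>u. f1 (r u) (r1 u)) has_real_derivative f2 (r u) (r1 u) (r1 u) + f1 (r u) (r2 u)) (at u within S)"
    by (simp add: has_real_derivative_iff_has_vector_derivative o_def add.commute)
qed

lemma blinfun_norm_bound_on_cball:
  fixes f :: "'a::euclidean_space \<Rightarrow> 'b::real_normed_vector"
  assumes "\<forall>x. (f has_derivative g x) (at x)" and C: "C > 0"
  obtains B where "B \<ge> 0" "\<And>x. norm x \<le> C \<Longrightarrow> norm (f x) \<le> B"
proof -
  have "continuous_on UNIV f" using assms(1)
    by (meson continuous_at_imp_continuous_on has_derivative_continuous)
  then have "continuous_on (cball 0 C) f" by (rule continuous_on_subset) auto
  then have "bounded (f ` cball 0 C)" by (intro compact_imp_bounded compact_continuous_image) auto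
  then obtain B where B: "\<And>y. y \<in> f ` cball 0 C \<Longrightarrow> norm y \<le> B" by (auto simp: bounded_iff)
  have "norm (f 0) \<le> B" using B C by auto
  then have "B \<ge> 0" using norm_ge_zero order.trans by blast
  moreover have "\<And>x. norm x \<le> C \<Longrightarrow> norm (f x) \<le> B" using B by auto
  ultimately show ?thesis using that by blast
qed

lemma sqrt_powr_q: "(x::real) > 0 \<Longrightarrow> sqrt x powr q = x powr (q/2)"
  by (simp add: powr_half_sqrt[symmetric] powr_powr)

theorem lemma4p1:
  fixes A :: "'a::euclidean_space \<Rightarrow> real" and C tf \<xi>0 :: real
    and r r1 r2 r3 :: "real \<Rightarrow> real \<Rightarrow> 'a"
    and y y' :: "real \<Rightarrow> real \<Rightarrow> real \<Rightarrow> real"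
  assumes tf: "tf > 0" and Cpos: "C > 0"
    and A_C3: "C3 A" and A_pos: "\<forall>x. A x > 0" and A_lb: "\<forall>x. A x \<ge> 1 / C"
    and r_deriv: "\<forall>\<epsilon>>0. \<forall>t\<in>{0..tf}.
         (r \<epsilon> has_vector_derivative r1 \<epsilon> t) (at t within {0..tf}) \<and>
         (r1 \<epsilon> has_vector_derivative r2 \<epsilon> t) (at t within {0..tf}) \<and>
         (r2 \<epsilon> has_vector_derivative r3 \<epsilon> t) (at t within {0..tf})"
    and r3_cont: "\<forall>\<epsilon>>0. continuous_on {0..tf} (r3 \<epsilon>)"
    and r_bnd: "\<forall>\<epsilon>>0. \<forall>t\<in>{0..tf}.
         norm (r \<epsilon> t) \<le> C \<and> norm (r1 \<epsilon> t) \<le> C \<and> norm (r2 \<epsilon> t) \<le> C"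
    and y_ode: "\<forall>\<epsilon>>0. \<forall>s\<in>{0..tf}. y \<epsilon> s s = 0 \<and> y' \<epsilon> s s = \<xi>0 \<and>
         (\<forall>t\<in>{s..tf}.
            (y \<epsilon> s has_real_derivative y' \<epsilon> s t) (at t within {s..tf}) \<and>
            (y' \<epsilon> s has_real_derivative (- A (r \<epsilon> t) * y \<epsilon> s t / \<epsilon>)) (at t within {s..tf}))"
  shows "\<exists>K \<epsilon>0. \<epsilon>0 > 0 \<and> (\<forall>\<epsilon>. 0 < \<epsilon> \<and> \<epsilon> < \<epsilon>0 \<longrightarrow> (\<forall>s t. 0 \<le> s \<and> s \<le> t \<and> t \<le> tf \<longrightarrow>
      \<bar>y \<epsilon> s t - sqrt \<epsilon> * kfun A r \<epsilon> t powr (-1/2) * kfun A r \<epsilon> s powr (-1/2)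
          * sin ((kappa A r \<epsilon> t - kappa A r \<epsilon> s) / sqrt \<epsilon>) * \<xi>0\<bar> \<le> K * \<epsilon> \<and>
      \<bar>y' \<epsilon> s t - kfun A r \<epsilon> t powr (1/2) * kfun A r \<epsilon> s powr (-1/2)
          * cos ((kappa A r \<epsilon> t - kappa A r \<epsilon> s) / sqrt \<epsilon>) * \<xi>0\<bar> \<le> K * sqrt \<epsilon>))"
proof -
  obtain f1 :: "'a \<Rightarrow> ('a \<Rightarrow>\<^sub>L real)" and f2 :: "'a \<Rightarrow> ('a \<Rightarrow>\<^sub>L ('a \<Rightarrow>\<^sub>L real))"
      and f3 :: "'a \<Rightarrow> ('a \<Rightarrow>\<^sub>L ('a \<Rightarrow>\<^sub>L ('a \<Rightarrow>\<^sub>L real)))"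
    where fA: "\<forall>x. (A has_derivative blinfun_apply (f1 x)) (at x)"
      and f1d: "\<forall>x. (f1 has_derivative blinfun_apply (f2 x)) (at x)"
      and f2d: "\<forall>x. (f2 has_derivative blinfun_apply (f3 x)) (at x)"
      and "continuous_on UNIV f3"
    using A_C3 unfolding C3_def by (elim exE conjE) (rule that; assumption)
  obtain D1 where D1: "D1 \<ge> 0" "\<And>x. norm x \<le> C \<Longrightarrow> norm (f1 x) \<le> D1"
    by (rule blinfun_norm_bound_on_cball[of f1 "\<lambda>x. blinfun_apply (f2 x)" C, OF f1d Cpos]) blast
  obtain D2 where D2: "D2 \<ge> 0" "\<And>x. norm x \<le> C \<Longrightarrow> norm (f2 x) \<le> D2"
    by (rule blinfun_norm_bound_on_cball[of f2 "\<lambda>x. blinfun_apply (f3 x)" C, OF f2d Cpos]) blast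
  define m where "m = 1 / C"
  define B1 where "B1 = D1 * C"
  define B2 where "B2 = D2 * C * C + D1 * C"
  define K where "K = max (wK1 m B1 B2 tf \<xi>0) (wK2 m B1 B2 tf \<xi>0)"
  have m: "m > 0" unfolding m_def using Cpos by simp
  show ?thesis
  proof (rule exI[of _ K], rule exI[of _ 1], rule conjI)
    show "(0::real) < 1" by simp
  next
    show "\<forall>\<epsilon>. 0 < \<epsilon> \<and> \<epsilon> < 1 \<longrightarrow> (\<forall>s t. 0 \<le> s \<and> s \<le> t \<and> t \<le> tf \<longrightarrow>
      \<bar>y \<epsilon> s t - sqrt \<epsilon> * kfun A r \<epsilon> t powr (-1/2) * kfun A r \<epsilon> s powr (-1/2)
          * sin ((kappa A r \<epsilon> t - kappa A r \<epsilon> s) / sqrt \<epsilon>) * \<xi>0\<bar> \<le> K * \<epsilon> \<and>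
      \<bar>y' \<epsilon> s t - kfun A r \<epsilon> t powr (1/2) * kfun A r \<epsilon> s powr (-1/2)
          * cos ((kappa A r \<epsilon> t - kappa A r \<epsilon> s) / sqrt \<epsilon>) * \<xi>0\<bar> \<le> K * sqrt \<epsilon>)"
    proof (intro allI impI)
    fix \<epsilon> s t :: real
    assume eps: "0 < \<epsilon> \<and> \<epsilon> < 1" and st: "0 \<le> s \<and> s \<le> t \<and> t \<le> tf"
    then have eps: "\<epsilon> > 0" and st: "0 \<le> s" "s \<le> t" "t \<le> tf" by auto
    define a where "a u = A (r \<epsilon> u)" for u
    define a1 where "a1 u = f1 (r \<epsilon> u) (r1 \<epsilon> u)" for u
    define a2 where "a2 u = f2 (r \<epsilon> u) (r1 \<epsilon> u) (r1 \<epsilon> u) + f1 (r \<epsilon> u) (r2 \<epsilon> u)" for u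
    define th where "th u = (kappa A r \<epsilon> u - kappa A r \<epsilon> s) / sqrt \<epsilon>" for u
    have sI: "s \<in> {0..tf}" using st by auto
    have da: "(a has_real_derivative a1 u) (at u within {0..tf})"
         "(a1 has_real_derivative a2 u) (at u within {0..tf})" if u: "u \<in> {0..tf}" for u
      using comp_derivs[OF fA f1d, of "r \<epsilon>" "r1 \<epsilon>" u "{0..tf}" "r2 \<epsilon>"] r_deriv eps u
      unfolding a_def[abs_def] a1_def[abs_def] a2_def by auto
    have acont: "continuous_on {0..tf} a" by (rule DERIV_continuous_on[OF da(1)])
    have kcont: "continuous_on {0..tf} (kfun A r \<epsilon>)"
    proof -
      have "continuous_on {0..tf} (\<lambda>u. sqrt (a u))" using acont by (intro continuous_intros)
      then show ?thesis unfolding kfun_def[abs_def] a_def .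
    qed
    have dk: "((\<lambda>u. kappa A r \<epsilon> u) has_real_derivative kfun A r \<epsilon> u) (at u within {0..tf})"
      if u: "u \<in> {0..tf}" for u
      using integral_has_vector_derivative[OF kcont u]
      unfolding kappa_def has_real_derivative_iff_has_vector_derivative .
    have bnds: "m \<le> a u \<and> \<bar>a1 u\<bar> \<le> B1 \<and> \<bar>a2 u\<bar> \<le> B2" if u: "u \<in> {0..tf}" for u
    proof -
      have rb: "norm (r \<epsilon> u) \<le> C" "norm (r1 \<epsilon> u) \<le> C" "norm (r2 \<epsilon> u) \<le> C"
        using r_bnd eps u by auto
      have "m \<le> a u" unfolding m_def a_def using A_lb by auto
      moreover have b1: "\<bar>a1 u\<bar> \<le> B1"
      proof -
        have "\<bar>a1 u\<bar> \<le> norm (f1 (r \<epsilon> u)) * norm (r1 \<epsilon> u)" unfolding a1_def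
          using norm_blinfun[of "f1 (r \<epsilon> u)" "r1 \<epsilon> u"] by simp
        also have "\<dots> \<le> D1 * C" using D1 rb by (intro mult_mono) auto
        finally show ?thesis unfolding B1_def .
      qed
      moreover have "\<bar>a2 u\<bar> \<le> B2"
      proof -
        have "\<bar>f2 (r \<epsilon> u) (r1 \<epsilon> u) (r1 \<epsilon> u)\<bar> \<le> norm (f2 (r \<epsilon> u) (r1 \<epsilon> u)) * norm (r1 \<epsilon> u)"
          using norm_blinfun[of "f2 (r \<epsilon> u) (r1 \<epsilon> u)" "r1 \<epsilon> u"] by simp
        also have "\<dots> \<le> (norm (f2 (r \<epsilon> u)) * norm (r1 \<epsilon> u)) * norm (r1 \<epsilon> u)"
          by (intro mult_right_mono norm_blinfun) auto
        also have "\<dots> \<le> (D2 * C) * C" using D2 rb Cpos by (intro mult_mono) auto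
        finally have 1: "\<bar>f2 (r \<epsilon> u) (r1 \<epsilon> u) (r1 \<epsilon> u)\<bar> \<le> D2 * C * C" .
        have "\<bar>f1 (r \<epsilon> u) (r2 \<epsilon> u)\<bar> \<le> norm (f1 (r \<epsilon> u)) * norm (r2 \<epsilon> u)"
          using norm_blinfun[of "f1 (r \<epsilon> u)" "r2 \<epsilon> u"] by simp
        also have "\<dots> \<le> D1 * C" using D1 rb by (intro mult_mono) auto
        finally have 2: "\<bar>f1 (r \<epsilon> u) (r2 \<epsilon> u)\<bar> \<le> D1 * C" .
        show ?thesis unfolding a2_def B2_def using 1 2 by linarith
      qed
      ultimately show ?thesis by blast
    qed
    have W: "\<bar>y \<epsilon> s t - sqrt \<epsilon> * a t powr (-1/4) * a s powr (-1/4) * sin (th t) * \<xi>0\<bar> \<le> wK1 m B1 B2 tf \<xi>0 * \<epsilon>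
     \<and> \<bar>y' \<epsilon> s t - a t powr (1/4) * a s powr (-1/4) * cos (th t) * \<xi>0\<bar> \<le> wK2 m B1 B2 tf \<xi>0 * sqrt \<epsilon>"
    proof (rule wkb[OF eps m st(2,3)])
      show "t - s \<le> tf" using st by simp
      show "th s = 0" unfolding th_def by simp
      show "y \<epsilon> s s = 0" "y' \<epsilon> s s = \<xi>0" using y_ode eps sI by auto
      fix u assume u: "u \<in> {s..tf}"
      then have u0: "u \<in> {0..tf}" using st by auto
      have sub: "{s..tf} \<subseteq> {0..tf}" using st by auto
      have "(th has_real_derivative kfun A r \<epsilon> u / sqrt \<epsilon>) (at u within {s..tf})"
        unfolding th_def[abs_def] using DERIV_cdivide[OF DERIV_diff[OF DERIV_subset[OF dk[OF u0] sub] DERIV_const[of "kappa A r \<epsilon> s"]], of "sqrt \<epsilon>"]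
        by simp
      then have "(th has_real_derivative sqrt (a u) / sqrt \<epsilon>) (at u within {s..tf})"
        unfolding kfun_def a_def .
      moreover have "(y \<epsilon> s has_real_derivative y' \<epsilon> s u) (at u within {s..tf}) \<and>
            (y' \<epsilon> s has_real_derivative (- a u * y \<epsilon> s u / \<epsilon>)) (at u within {s..tf})"
        using y_ode eps sI u unfolding a_def by auto
      ultimately show "(a has_real_derivative a1 u) (at u within {s..tf}) \<and>
        (a1 has_real_derivative a2 u) (at u within {s..tf}) \<and>
        (th has_real_derivative sqrt (a u) / sqrt \<epsilon>) (at u within {s..tf}) \<and>
        (y \<epsilon> s has_real_derivative y' \<epsilon> s u) (at u within {s..tf}) \<and>
        (y' \<epsilon> s has_real_derivative (- a u * y \<epsilon> s u / \<epsilon>)) (at u within {s..tf}) \<and>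
        m \<le> a u \<and> \<bar>a1 u\<bar> \<le> B1 \<and> \<bar>a2 u\<bar> \<le> B2"
        using DERIV_subset[OF da(1)[OF u0] sub] DERIV_subset[OF da(2)[OF u0] sub] bnds[OF u0] by blast
    qed
    have apos: "a t > 0" "a s > 0" unfolding a_def using A_pos by auto
    have kp: "kfun A r \<epsilon> t powr (-1/2) = a t powr (-1/4)" "kfun A r \<epsilon> s powr (-1/2) = a s powr (-1/4)"
       "kfun A r \<epsilon> t powr (1/2) = a t powr (1/4)"
      unfolding kfun_def a_def[symmetric] using apos by (simp_all add: sqrt_powr_q)
    have "wK1 m B1 B2 tf \<xi>0 * \<epsilon> \<le> K * \<epsilon>" "wK2 m B1 B2 tf \<xi>0 * sqrt \<epsilon> \<le> K * sqrt \<epsilon>"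
      unfolding K_def using eps by (auto intro!: mult_right_mono)
    then show "\<bar>y \<epsilon> s t - sqrt \<epsilon> * kfun A r \<epsilon> t powr (-1/2) * kfun A r \<epsilon> s powr (-1/2)
          * sin ((kappa A r \<epsilon> t - kappa A r \<epsilon> s) / sqrt \<epsilon>) * \<xi>0\<bar> \<le> K * \<epsilon> \<and>
      \<bar>y' \<epsilon> s t - kfun A r \<epsilon> t powr (1/2) * kfun A r \<epsilon> s powr (-1/2)
          * cos ((kappa A r \<epsilon> t - kappa A r \<epsilon> s) / sqrt \<epsilon>) * \<xi>0\<bar> \<le> K * sqrt \<epsilon>"
      using W unfolding kp th_def by linarith
  qed
  qed
qed

end
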